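(* Let $Y$ be a Young diagram. For any 2-cover $P$ of $H(Y)$ there exists a 2-cover $P'$ of $H(Y)$ such that $|P'|=|P|$ and $P'\cap(C\times S)$ is closed down.
   Context: For $Y$ with row lengths $a_1\ge\cdots\ge a_m\ge0$, $H(Y)$ has vertex sides $R=\{r_1,\dots,r_m\}$, $C=\{c_1,\dots,c_{a_1}\}$, $S=\{s_1,\dots,s_{a_1}\}$ and edges $\{r_i,c_j,s_k\}$ for $1\le i\le m$, $1\le j,k\le a_i$. A 2-cover of $H(Y)$ is a set of 2-element vertex sets such that every edge contains a member of it. $C\times S$ is the set of pairs $c_js_k$. A set $\Gamma\subseteq C\times S$ is closed down if $c_ps_q\in\Gamma$ implies $c_{p'}s_{q'}\in\Gamma$ for all $p'\le p$, $q'\le q$. *)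

theory Defs
  imports Main
begin

text \<open>Vertices of H(Y): r_i, c_j, s_k (indices 1-based as in the paper).\<close>
datatype vert = R nat | C nat | S nat

text \<open>A Young diagram is given by its list of row lengths a_1 \<ge> ... \<ge> a_m \<ge> 0
  (list element i-1 is a_i).\<close>
definition young :: "nat list \<Rightarrow> bool" where
  "young a \<longleftrightarrow> sorted_wrt (\<ge>) a"

definition first_row :: "nat list \<Rightarrow> nat" where
  "first_row a = (if a = [] then 0 else hd a)"

definition verts :: "nat list \<Rightarrow> vert set" where
  "verts a = R ` {1..length a} \<union> C ` {1..first_row a} \<union> S ` {1..first_row a}"

definition edges :: "nat list \<Rightarrow> vert set set" where
  "edges a = {{R i, C j, S k} | i j k. 1 \<le> i \<and> i \<le> length a
      \<and> 1 \<le> j \<and> j \<le> a ! (i - 1) \<and> 1 \<le> k \<and> k \<le> a ! (i - 1)}"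

definition two_cover :: "nat list \<Rightarrow> vert set set \<Rightarrow> bool" where
  "two_cover a P \<longleftrightarrow> (\<forall>p\<in>P. p \<subseteq> verts a \<and> card p = 2) \<and> (\<forall>e\<in>edges a. \<exists>p\<in>P. p \<subseteq> e)"

definition CS :: "nat list \<Rightarrow> vert set set" where
  "CS a = {{C j, S k} | j k. 1 \<le> j \<and> j \<le> first_row a \<and> 1 \<le> k \<and> k \<le> first_row a}"

definition closed_down :: "vert set set \<Rightarrow> bool" where
  "closed_down \<Gamma> \<longleftrightarrow> (\<forall>p q p' q'. {C p, S q} \<in> \<Gamma> \<longrightarrow> 1 \<le> p' \<longrightarrow> p' \<le> p \<longrightarrow> 1 \<le> q' \<longrightarrow> q' \<le> q
      \<longrightarrow> {C p', S q'} \<in> \<Gamma>)"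

end

theory Submission
  imports Defs
begin

lemma finite_verts: "finite (verts a)" by (simp add: verts_def)

definition allp :: "nat list \<Rightarrow> vert set set" where
  "allp a = {p. p \<subseteq> verts a \<and> card p = 2}"

lemma finite_allp: "finite (allp a)"
  by (rule finite_subset[of _ "Pow (verts a)"]) (auto simp: allp_def finite_verts)

lemma cover_sub: "two_cover a P \<Longrightarrow> P \<subseteq> allp a"
  by (auto simp: two_cover_def allp_def)

lemma CS_sub: "CS a \<subseteq> allp a"
  by (auto simp: CS_def allp_def verts_def)

lemma CS_eq: "{C p, S q} = {C j, S k} \<longleftrightarrow> p = j \<and> q = k"
  by (auto simp: doubleton_eq_iff)

lemma mem_CS: "{C p, S q} \<in> CS a \<longleftrightarrow> 1 \<le> p \<and> p \<le> first_row a \<and> 1 \<le> q \<and> q \<le> first_row a"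
  by (auto simp: CS_def doubleton_eq_iff)

lemma extend:
  assumes tc: "two_cover a P" and cd: "closed_down (P \<inter> CS a)" and lt: "card P < card (allp a)"
  shows "\<exists>P''. two_cover a P'' \<and> card P'' = Suc (card P) \<and> closed_down (P'' \<inter> CS a)"
proof -
  have sub: "P \<subseteq> allp a" using tc by (rule cover_sub)
  have finP: "finite P" using sub finite_allp finite_subset by blast
  have tc_ins: "two_cover a (insert x P)" if "x \<in> allp a" for x
    using tc that by (auto simp: two_cover_def allp_def)
  show ?thesis
  proof (cases "allp a - P - CS a = {}")
    case False
    then obtain x where x: "x \<in> allp a" "x \<notin> P" "x \<notin> CS a" by blast
    have "insert x P \<inter> CS a = P \<inter> CS a" using x by auto
    then show ?thesis using tc_ins[OF x(1)] cd x finP by (intro exI[of _ "insert x P"]) auto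
  next
    case True
    have "P \<noteq> allp a" using lt by auto
    then obtain y where y: "y \<in> allp a" "y \<notin> P" using sub by blast
    with True have "y \<in> CS a" by blast
    then obtain j0 k0 where y2: "y = {C j0, S k0}" "1 \<le> j0" "j0 \<le> first_row a" "1 \<le> k0" "k0 \<le> first_row a"
      by (auto simp: CS_def)
    define Q where "Q s \<longleftrightarrow> (\<exists>j k. j + k = s \<and> 1 \<le> j \<and> j \<le> first_row a \<and> 1 \<le> k \<and> k \<le> first_row a \<and> {C j, S k} \<notin> P)" for s
    have "Q (j0+k0)" using y y2 unfolding Q_def by blast
    then obtain s where "Q s" and smin: "\<forall>t<s. \<not> Q t" using exists_least_iff[of Q] by blast
    then obtain j k where jk: "j + k = s" "1 \<le> j" "j \<le> first_row a" "1 \<le> k" "k \<le> first_row a" "{C j, S k} \<notin> P"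
      unfolding Q_def by blast
    have xin: "{C j, S k} \<in> CS a" using jk by (simp add: mem_CS)
    have "closed_down (insert {C j, S k} P \<inter> CS a)"
      unfolding closed_down_def
    proof (intro allI impI)
      fix p q p' q'
      assume h: "{C p, S q} \<in> insert {C j, S k} P \<inter> CS a" "1 \<le> p'" "p' \<le> p" "1 \<le> q'" "q' \<le> q"
      show "{C p', S q'} \<in> insert {C j, S k} P \<inter> CS a"
      proof (cases "{C p, S q} = {C j, S k}")
        case True
        hence pq: "p = j" "q = k" by (simp_all add: CS_eq)
        show ?thesis
        proof (cases "p' = j \<and> q' = k")
          case True then show ?thesis using xin by simp
        next
          case False
          hence "p' + q' < s" using pq h jk by auto
          hence nq: "\<not> Q (p'+q')" using smin by blast
          have "{C p', S q'} \<in> P"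
          proof (rule ccontr)
            assume "{C p', S q'} \<notin> P"
            moreover have "p' \<le> first_row a" "q' \<le> first_row a" using h pq jk by auto
            ultimately have "Q (p'+q')" unfolding Q_def using h by blast
            with nq show False by simp
          qed
          moreover have "{C p', S q'} \<in> CS a" using h pq jk by (simp add: mem_CS)
          ultimately show ?thesis by simp
        qed
      next
        case False
        hence "{C p, S q} \<in> P \<inter> CS a" using h by simp
        hence "{C p', S q'} \<in> P \<inter> CS a" using cd h unfolding closed_down_def by blast
        then show ?thesis by simp
      qed
    qed
    then show ?thesis using tc_ins[OF CS_sub[THEN subsetD, OF xin]] jk finP
      by (intro exI[of _ "insert {C j, S k} P"]) auto
  qed
qed

lemma pad:
  assumes "two_cover a P0" "closed_down (P0 \<inter> CS a)"
  shows "card P0 \<le> k \<Longrightarrow> k \<le> card (allp a) \<Longrightarrow> \<exists>P'. two_cover a P' \<and> card P' = k \<and> closed_down (P' \<inter> CS a)"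
proof (induction k)
  case 0 then show ?case using assms by (intro exI[of _ P0]) auto
next
  case (Suc k)
  show ?case
  proof (cases "card P0 = Suc k")
    case True then show ?thesis using assms by blast
  next
    case False
    then obtain P' where "two_cover a P'" "card P' = k" "closed_down (P' \<inter> CS a)" using Suc by fastforce
    then show ?thesis using extend[of a P'] Suc.prems by auto
  qed
qed

lemma young_le:
  assumes "young a" "1 \<le> i" "i \<le> length a" shows "a ! (i - 1) \<le> first_row a"
proof -
  have ne: "a \<noteq> []" using assms by auto
  have "first_row a = a ! 0" using ne by (simp add: first_row_def hd_conv_nth)
  moreover have "a ! (i-1) \<le> a ! 0"
  proof (cases "i = 1")
    case True then show ?thesis by simp
  next
    case False
    then show ?thesis using assms unfolding young_def sorted_wrt_iff_nth_less by auto
  qed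
  ultimately show ?thesis by simp
qed

lemma sub3:
  assumes "x \<noteq> y" "x \<noteq> z" "y \<noteq> z" "p \<subseteq> {x,y,z}" "card p = 2"
  shows "p = {x,y} \<or> p = {x,z} \<or> p = {y,z}"
  using assms unfolding card_2_iff by auto

lemma compress:
  assumes fI: "finite I" and fA: "\<And>i. i \<in> I \<Longrightarrow> finite (A i)" and fB: "\<And>i. i \<in> I \<Longrightarrow> finite (B i)"
  shows "card (\<Union>i\<in>I. A i \<times> {1..card (B i)}) \<le> card (\<Union>i\<in>I. A i \<times> B i)"
proof -
  define J where "J = (\<Union>i\<in>I. A i)"
  define Ij where "Ij j = {i\<in>I. j \<in> A i}" for j
  have e1: "(\<Union>i\<in>I. A i \<times> {1..card (B i)}) = Sigma J (\<lambda>j. \<Union>i\<in>Ij j. {1..card (B i)})"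
    by (auto simp: J_def Ij_def)
  have e2: "(\<Union>i\<in>I. A i \<times> B i) = Sigma J (\<lambda>j. \<Union>i\<in>Ij j. B i)"
    by (auto simp: J_def Ij_def)
  have fJ: "finite J" using fI fA by (simp add: J_def)
  have fIj: "finite (Ij j)" for j using fI by (simp add: Ij_def)
  have le: "card (\<Union>i\<in>Ij j. {1..card (B i)}) \<le> card (\<Union>i\<in>Ij j. B i)" if "j \<in> J" for j
  proof -
    have ne: "Ij j \<noteq> {}" using that by (auto simp: J_def Ij_def)
    define M where "M = Max ((\<lambda>i. card (B i)) ` Ij j)"
    have "M \<in> (\<lambda>i. card (B i)) ` Ij j" unfolding M_def using ne fIj by (intro Max_in) auto
    then obtain i0 where i0: "i0 \<in> Ij j" "card (B i0) = M" by blast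
    have mx: "card (B i) \<le> card (B i0)" if "i \<in> Ij j" for i
      unfolding i0(2) M_def using that fIj by (intro Max_ge) auto
    have "(\<Union>i\<in>Ij j. {1..card (B i)}) \<subseteq> {1..card (B i0)}" using mx by force
    hence "card (\<Union>i\<in>Ij j. {1..card (B i)}) \<le> card (B i0)"
      by (metis card_atLeastAtMost card_mono diff_Suc_1 finite_atLeastAtMost)
    also have "card (B i0) \<le> card (\<Union>i\<in>Ij j. B i)"
      by (rule card_mono) (use fIj fB i0 in \<open>auto simp: Ij_def\<close>)
    finally show ?thesis .
  qed
  have c1: "card (Sigma J (\<lambda>j. \<Union>i\<in>Ij j. {1..card (B i)})) = (\<Sum>j\<in>J. card (\<Union>i\<in>Ij j. {1..card (B i)}))"
    by (rule card_SigmaI) (use fJ fIj in auto)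
  have c2: "card (Sigma J (\<lambda>j. \<Union>i\<in>Ij j. B i)) = (\<Sum>j\<in>J. card (\<Union>i\<in>Ij j. B i))"
    by (rule card_SigmaI) (use fJ fIj fB in \<open>auto simp: Ij_def\<close>)
  show ?thesis unfolding e1 e2 c1 c2 using le by (rule sum_mono)
qed

lemma compress2:
  assumes fI: "finite I" and fA: "\<And>i. i \<in> I \<Longrightarrow> finite (A i)" and fB: "\<And>i. i \<in> I \<Longrightarrow> finite (B i)"
  shows "card (\<Union>i\<in>I. {1..card (A i)} \<times> B i) \<le> card (\<Union>i\<in>I. A i \<times> B i)"
proof -
  have inj: "card (prod.swap ` X) = card X" for X :: "('c \<times> 'd) set"
    by (rule card_image) (auto simp: inj_on_def)
  have e1: "(\<Union>i\<in>I. {1..card (A i)} \<times> B i) = prod.swap ` (\<Union>i\<in>I. B i \<times> {1..card (A i)})" by auto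
  have e2: "(\<Union>i\<in>I. A i \<times> B i) = prod.swap ` (\<Union>i\<in>I. B i \<times> A i)" by auto
  show ?thesis unfolding e1 e2 using compress[of I B A] fI fA fB by (simp only: inj)
qed

theorem lemma5:
  fixes a :: "nat list" and P :: "vert set set"
  assumes "young a" and "two_cover a P"
  shows "\<exists>P'. two_cover a P' \<and> card P' = card P \<and> closed_down (P' \<inter> CS a)"
proof -
  define I where "I = {1..length a}"
  define n where "n = first_row a"
  define ai where "ai i = a ! (i - 1)" for i
  have ain: "ai i \<le> n" if "i \<in> I" for i
    using young_le[OF assms(1)] that unfolding I_def ai_def n_def by auto
  define A where "A i = {j\<in>{1..ai i}. {R i, C j} \<notin> P}" for i
  define B where "B i = {k\<in>{1..ai i}. {R i, S k} \<notin> P}" for i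
  have fA: "finite (A i)" for i by (simp add: A_def)
  have fB: "finite (B i)" for i by (simp add: B_def)
  have As: "A i \<subseteq> {1..ai i}" for i by (auto simp: A_def)
  have Bs: "B i \<subseteq> {1..ai i}" for i by (auto simp: B_def)
  have dA: "card ({1..ai i} - A i) = ai i - card (A i)" for i by (subst card_Diff_subset[OF fA As]) simp
  have dB: "card ({1..ai i} - B i) = ai i - card (B i)" for i by (subst card_Diff_subset[OF fB Bs]) simp
  have cA: "card (A i) \<le> ai i" for i
    by (metis (no_types, lifting) A_def card_atLeastAtMost card_mono diff_Suc_1 finite_atLeastAtMost mem_Collect_eq subsetI)
  have cB: "card (B i) \<le> ai i" for i
    by (metis (no_types, lifting) B_def card_atLeastAtMost card_mono diff_Suc_1 finite_atLeastAtMost mem_Collect_eq subsetI)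
  define N where "N = (\<Union>i\<in>I. A i \<times> B i)"
  define N' where "N' = (\<Union>i\<in>I. {1..card (A i)} \<times> {1..card (B i)})"
  define f1 :: "nat \<times> nat \<Rightarrow> vert set" where "f1 x = {R (fst x), C (snd x)}" for x
  define f2 :: "nat \<times> nat \<Rightarrow> vert set" where "f2 x = {R (fst x), S (snd x)}" for x
  define f3 :: "nat \<times> nat \<Rightarrow> vert set" where "f3 x = {C (fst x), S (snd x)}" for x
  have i1: "inj_on f1 X" for X by (auto simp: inj_on_def f1_def doubleton_eq_iff prod_eq_iff)
  have i2: "inj_on f2 X" for X by (auto simp: inj_on_def f2_def doubleton_eq_iff prod_eq_iff)
  have i3: "inj_on f3 X" for X by (auto simp: inj_on_def f3_def doubleton_eq_iff prod_eq_iff)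
  define X1 where "X1 = f1 ` (SIGMA i:I. {card (A i)+1..ai i})"
  define X2 where "X2 = f2 ` (SIGMA i:I. {card (B i)+1..ai i})"
  define X3 where "X3 = f3 ` N'"
  define Y1 where "Y1 = f1 ` (SIGMA i:I. {1..ai i} - A i)"
  define Y2 where "Y2 = f2 ` (SIGMA i:I. {1..ai i} - B i)"
  define Y3 where "Y3 = f3 ` N"
  define P0 where "P0 = X1 \<union> X2 \<union> X3"
  have fI: "finite I" by (simp add: I_def)
  have finP: "finite P" using cover_sub[OF assms(2)] finite_allp finite_subset by blast
  have Y3P: "Y3 \<subseteq> P"
  proof
    fix x assume "x \<in> Y3"
    then obtain i j k where ijk: "i \<in> I" "j \<in> A i" "k \<in> B i" "x = {C j, S k}"
      by (auto simp: Y3_def N_def f3_def)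
    have "{R i, C j, S k} \<in> edges a" using ijk unfolding edges_def
      by (auto simp: A_def B_def I_def ai_def)
    then obtain p where p: "p \<in> P" "p \<subseteq> {R i, C j, S k}" "card p = 2" using assms(2)
      by (auto simp: two_cover_def)
    have "p = {R i, C j} \<or> p = {R i, S k} \<or> p = {C j, S k}" using sub3[OF _ _ _ p(2,3)] by simp
    moreover have "{R i, C j} \<notin> P" "{R i, S k} \<notin> P" using ijk by (auto simp: A_def B_def)
    ultimately show "x \<in> P" using p ijk by auto
  qed
  have YP: "Y1 \<union> Y2 \<union> Y3 \<subseteq> P" using Y3P by (auto simp: Y1_def Y2_def f1_def f2_def A_def B_def)
  have d1: "X1 \<inter> X2 = {}" "(X1 \<union> X2) \<inter> X3 = {}" "Y1 \<inter> Y2 = {}" "(Y1 \<union> Y2) \<inter> Y3 = {}"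
    by (auto simp: X1_def X2_def X3_def Y1_def Y2_def Y3_def f1_def f2_def f3_def doubleton_eq_iff)
  have fX: "finite X1" "finite X2" "finite X3" "finite Y1" "finite Y2" "finite Y3"
    by (auto simp: X1_def X2_def X3_def Y1_def Y2_def Y3_def N_def N'_def fI fA fB)
  have c1: "card X1 = card Y1"
    unfolding X1_def Y1_def card_image[OF i1]
    using fI dA by simp
  have c2: "card X2 = card Y2"
    unfolding X2_def Y2_def card_image[OF i2]
    using fI dB by simp
  have c3: "card X3 \<le> card Y3"
  proof -
    have "card N' \<le> card (\<Union>i\<in>I. A i \<times> {1..card (B i)})"
      unfolding N'_def by (rule compress2) (use fI fA in auto)
    also have "\<dots> \<le> card N" unfolding N_def by (rule compress) (use fI fA fB in auto)
    finally show ?thesis unfolding X3_def Y3_def card_image[OF i3] .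
  qed
  have "card P0 = card X1 + card X2 + card X3"
    unfolding P0_def using d1 fX by (simp add: card_Un_disjoint)
  also have "\<dots> \<le> card Y1 + card Y2 + card Y3" using c1 c2 c3 by simp
  also have "\<dots> = card (Y1 \<union> Y2 \<union> Y3)" using d1 fX by (simp add: card_Un_disjoint)
  also have "\<dots> \<le> card P" using YP finP by (rule card_mono[rotated])
  finally have cP0: "card P0 \<le> card P" .
  have v1: "R i \<in> verts a" if "i \<in> I" for i using that by (auto simp: verts_def I_def)
  have v2: "C j \<in> verts a" if "1 \<le> j" "j \<le> n" for j using that by (auto simp: verts_def n_def)
  have v3: "S j \<in> verts a" if "1 \<le> j" "j \<le> n" for j using that by (auto simp: verts_def n_def)
  have tc0: "two_cover a P0"
    unfolding two_cover_def
  proof (rule conjI[OF ballI ballI])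
    fix p assume "p \<in> P0"
    then consider (a) i j where "p = {R i, C j}" "i \<in> I" "card (A i) + 1 \<le> j" "j \<le> ai i"
      | (b) i j where "p = {R i, S j}" "i \<in> I" "card (B i) + 1 \<le> j" "j \<le> ai i"
      | (c) i j k where "p = {C j, S k}" "i \<in> I" "1 \<le> j" "j \<le> card (A i)" "1 \<le> k" "k \<le> card (B i)"
      unfolding P0_def X1_def X2_def X3_def N'_def f1_def f2_def f3_def by auto
    then show "p \<subseteq> verts a \<and> card p = 2"
    proof cases
      case a then show ?thesis using v1 v2[of j] ain[of i] by auto
    next
      case b then show ?thesis using v1 v3[of j] ain[of i] by auto
    next
      case c then show ?thesis using v2[of j] v3[of k] ain[of i] cA[of i] cB[of i] by auto
    qed
  next
    fix e assume "e \<in> edges a"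
    then obtain i j k where e: "e = {R i, C j, S k}" "i \<in> I" "1 \<le> j" "j \<le> ai i" "1 \<le> k" "k \<le> ai i"
      unfolding edges_def I_def ai_def by auto
    show "\<exists>p\<in>P0. p \<subseteq> e"
    proof (cases "card (A i) < j")
      case True
      hence "f1 (i, j) \<in> P0" using e unfolding P0_def X1_def by auto
      then show ?thesis by (rule bexI[rotated]) (auto simp: e f1_def)
    next
      case F1: False
      show ?thesis
      proof (cases "card (B i) < k")
        case True
        hence "f2 (i, k) \<in> P0" using e unfolding P0_def X2_def by auto
        then show ?thesis by (rule bexI[rotated]) (auto simp: e f2_def)
      next
        case False
        hence "(j, k) \<in> N'" using e F1 unfolding N'_def by (intro UN_I[of i]) auto
        hence "f3 (j, k) \<in> P0" unfolding P0_def X3_def by auto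
        then show ?thesis by (rule bexI[rotated]) (auto simp: e f3_def)
      qed
    qed
  qed
  have cd0: "closed_down (P0 \<inter> CS a)"
    unfolding closed_down_def
  proof (intro allI impI)
    fix p q p' q'
    assume h: "{C p, S q} \<in> P0 \<inter> CS a" "1 \<le> p'" "p' \<le> p" "1 \<le> q'" "q' \<le> q"
    have "{C p, S q} \<in> X3" using h(1) unfolding P0_def X1_def X2_def f1_def f2_def
      by (auto simp: doubleton_eq_iff)
    then obtain x where x: "x \<in> N'" "{C p, S q} = f3 x" unfolding X3_def by auto
    hence "x = (p, q)" by (auto simp: f3_def doubleton_eq_iff prod_eq_iff)
    with x obtain i where i: "i \<in> I" "p \<le> card (A i)" "q \<le> card (B i)" unfolding N'_def by auto
    have "(p', q') \<in> N'" using i h unfolding N'_def by (intro UN_I[of i]) auto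
    hence "{C p', S q'} \<in> P0" unfolding P0_def X3_def f3_def by force
    moreover have "{C p', S q'} \<in> CS a" unfolding mem_CS
      using h i ain[of i] cA[of i] cB[of i] by (auto simp: n_def)
    ultimately show "{C p', S q'} \<in> P0 \<inter> CS a" by simp
  qed
  have "card P \<le> card (allp a)" using cover_sub[OF assms(2)] finite_allp by (rule card_mono[rotated])
  then show ?thesis using pad[OF tc0 cd0] cP0 by blast
qed

end
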